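(* Let $M_L\le GL(7,\mathbb{C})$ be the group generated by the permutation matrices $(12),(23),(34),(56),(67)$ and the matrix $A$ defined in the context. Then $M_L$ is isomorphic to the Coxeter group $W(D_6)$, which has $23040$ elements.
   Context: A permutation $\sigma\in S_7$ is identified with the $7\times7$ permutation matrix sending $e_i$ to $e_{\sigma(i)}$. The matrix $A$ is \[ A=\begin{pmatrix} 1&0&0&0&0&0&0\\ 0&1&0&0&0&0&0\\ 0&0&-1&0&0&0&1\\ 0&0&0&-1&0&0&1\\ 0&0&-1&-1&1&0&1\\ 0&0&-1&-1&0&1&1\\ 0&0&0&0&0&0&1 \end{pmatrix}. \] $W(D_6)$ denotes the Coxeter group of type $D_6$. *)

theory Defs
  imports "Jordan_Normal_Form.Matrix" "HOL-Algebra.Generated_Groups" "HOL-Combinatorics.Transposition"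
begin

definition GL_mat :: "nat \<Rightarrow> ('a::field) mat monoid" where
  "GL_mat n = \<lparr> carrier = {M \<in> carrier_mat n n. invertible_mat M},
                 mult = (\<lambda>M N. M * N), one = 1\<^sub>m n \<rparr>"

definition gen_subgroup :: "nat \<Rightarrow> ('a::field) mat set \<Rightarrow> 'a mat monoid" where
  "gen_subgroup n S = (GL_mat n) \<lparr> carrier := generate (GL_mat n) S \<rparr>"

definition perm_mat :: "nat \<Rightarrow> (nat \<Rightarrow> nat) \<Rightarrow> ('a::field) mat" where
  "perm_mat n \<sigma> = mat n n (\<lambda>(i,j). if i = \<sigma> j then 1 else 0)"

definition A_mat :: "complex mat" where
  "A_mat = mat_of_rows_list 7
    [[1,0,0,0,0,0,0],
     [0,1,0,0,0,0,0],
     [0,0,-1,0,0,0,1],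
     [0,0,0,-1,0,0,1],
     [0,0,-1,-1,1,0,1],
     [0,0,-1,-1,0,1,1],
     [0,0,0,0,0,0,1]]"

(* M_L: generated by the permutation matrices of (12),(23),(34),(56),(67) and A;
   points 1..7 of the paper are indices 0..6 here *)
definition M_L :: "complex mat monoid" where
  "M_L = gen_subgroup 7
     {perm_mat 7 (transpose 0 1), perm_mat 7 (transpose 1 2), perm_mat 7 (transpose 2 3),
      perm_mat 7 (transpose 4 5), perm_mat 7 (transpose 5 6), A_mat}"

definition refl_mat :: "nat \<Rightarrow> (nat \<Rightarrow> real) \<Rightarrow> real mat" where
  "refl_mat n \<alpha> = mat n n (\<lambda>(i,j). (if i = j then 1 else 0)
       - 2 * \<alpha> i * \<alpha> j / (\<Sum>k<n. (\<alpha> k)^2))"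

definition e_vec :: "nat \<Rightarrow> nat \<Rightarrow> real" where
  "e_vec i = (\<lambda>k. if k = i then 1 else 0)"

definition D6_simple_roots :: "(nat \<Rightarrow> real) set" where
  "D6_simple_roots = {(\<lambda>k. e_vec i k - e_vec (Suc i) k) | i. i < 5}
                     \<union> {(\<lambda>k. e_vec 4 k + e_vec 5 k)}"

(* the Coxeter group W(D_6), realised as the reflection group generated by the
   simple reflections of the D_6 root system (its faithful geometric representation) *)
definition W_D6 :: "real mat monoid" where
  "W_D6 = gen_subgroup 6 (refl_mat 6 ` D6_simple_roots)"

end

theory Submission
  imports Defs "HOL-Combinatorics.Permutations"
begin


lemma inv_char:
  fixes M :: "'a::field mat"
  assumes "M \<in> carrier_mat n n"
  shows "invertible_mat M \<longleftrightarrow> (\<exists>B\<in>carrier_mat n n. M*B = 1\<^sub>m n \<and> B*M = 1\<^sub>m n)"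
proof
  assume "invertible_mat M"
  then obtain B where B1: "M*B = 1\<^sub>m n" and B2: "B*M = 1\<^sub>m (dim_row B)"
    using assms unfolding invertible_mat_def inverts_mat_def by auto
  have c: "dim_col B = n" using arg_cong[OF B1, of dim_col] by simp
  have r: "dim_row B = n" using arg_cong[OF B2, of dim_col] assms by simp
  show "\<exists>B\<in>carrier_mat n n. M*B = 1\<^sub>m n \<and> B*M = 1\<^sub>m n"
    using B1 B2 c r by (intro bexI[of _ B]) auto
next
  assume "\<exists>B\<in>carrier_mat n n. M*B = 1\<^sub>m n \<and> B*M = 1\<^sub>m n"
  then show "invertible_mat M" using assms
    unfolding invertible_mat_def inverts_mat_def square_mat.simps by auto
qed

lemma GL_carrier: "carrier (GL_mat n) = {M \<in> carrier_mat n n. invertible_mat M}"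
  and GL_mult: "mult (GL_mat n) = (*)" and GL_one: "one (GL_mat n) = 1\<^sub>m n"
  by (simp_all add: GL_mat_def)

lemma GL_group: "group (GL_mat n :: 'a::field mat monoid)"
proof (rule groupI)
  show "\<one>\<^bsub>GL_mat n\<^esub> \<in> carrier (GL_mat n)"
    using inv_char[OF one_carrier_mat[of n]] by (auto simp: GL_carrier GL_one)
next
  fix x y :: "'a mat"
  assume x: "x \<in> carrier (GL_mat n)" and y: "y \<in> carrier (GL_mat n)"
  from x obtain B where xc: "x \<in> carrier_mat n n" and B: "B \<in> carrier_mat n n" "x*B = 1\<^sub>m n" "B*x = 1\<^sub>m n"
    by (auto simp: GL_carrier inv_char)
  from y obtain C where yc: "y \<in> carrier_mat n n" and C: "C \<in> carrier_mat n n" "y*C = 1\<^sub>m n" "C*y = 1\<^sub>m n"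
    by (auto simp: GL_carrier inv_char)
  have "(x*y)*(C*B) = x*(y*(C*B))" using assoc_mult_mat[OF xc yc mult_carrier_mat[OF C(1) B(1)]] by simp
  also have "y*(C*B) = (y*C)*B" using assoc_mult_mat[OF yc C(1) B(1)] by simp
  also have "x*((y*C)*B) = 1\<^sub>m n" using B C by simp
  finally have 1: "(x*y)*(C*B) = 1\<^sub>m n" .
  have "(C*B)*(x*y) = C*(B*(x*y))" using assoc_mult_mat[OF C(1) B(1) mult_carrier_mat[OF xc yc]] by simp
  also have "B*(x*y) = (B*x)*y" using assoc_mult_mat[OF B(1) xc yc] by simp
  also have "C*((B*x)*y) = 1\<^sub>m n" using B C yc by simp
  finally have 2: "(C*B)*(x*y) = 1\<^sub>m n" .
  show "x \<otimes>\<^bsub>GL_mat n\<^esub> y \<in> carrier (GL_mat n)"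
  proof -
    have "invertible_mat (x*y)" unfolding inv_char[OF mult_carrier_mat[OF xc yc]]
      using 1 2 mult_carrier_mat[OF C(1) B(1)] by blast
    then show ?thesis using xc yc by (simp add: GL_carrier GL_mult)
  qed
next
  fix x y z :: "'a mat"
  assume "x \<in> carrier (GL_mat n)" "y \<in> carrier (GL_mat n)" "z \<in> carrier (GL_mat n)"
  then have xc: "x \<in> carrier_mat n n" and yc: "y \<in> carrier_mat n n" and z: "z \<in> carrier_mat n n"
    by (auto simp: GL_carrier)
  then show "x \<otimes>\<^bsub>GL_mat n\<^esub> y \<otimes>\<^bsub>GL_mat n\<^esub> z = x \<otimes>\<^bsub>GL_mat n\<^esub> (y \<otimes>\<^bsub>GL_mat n\<^esub> z)"
    using assoc_mult_mat[OF xc yc z] by (simp add: GL_mult)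
next
  fix x assume "x \<in> carrier (GL_mat n)"
  then show "\<one>\<^bsub>GL_mat n\<^esub> \<otimes>\<^bsub>GL_mat n\<^esub> x = x"
    by (auto simp: GL_carrier GL_one GL_mult)
next
  fix x :: "'a mat"
  assume x: "x \<in> carrier (GL_mat n)"
  from x obtain B where xc: "x \<in> carrier_mat n n" and B: "B \<in> carrier_mat n n" "x*B = 1\<^sub>m n" "B*x = 1\<^sub>m n"
    by (auto simp: GL_carrier inv_char)
  have "B \<in> carrier (GL_mat n)" using B xc by (auto simp: GL_carrier inv_char)
  then show "\<exists>y\<in>carrier (GL_mat n). y \<otimes>\<^bsub>GL_mat n\<^esub> x = \<one>\<^bsub>GL_mat n\<^esub>"
    using B by (auto simp: GL_mult GL_one)
qed

definition spm :: "nat \<Rightarrow> (nat \<Rightarrow> nat) \<Rightarrow> (nat \<Rightarrow> 'a) \<Rightarrow> 'a::field mat" where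
  "spm n \<sigma> s = mat n n (\<lambda>(i,j). if i = \<sigma> j then s j else 0)"

lemma spm_carrier[simp]: "spm n \<sigma> s \<in> carrier_mat n n"
  by (simp add: spm_def)

lemma spm_dims[simp]: "dim_row (spm n \<sigma> s) = n" "dim_col (spm n \<sigma> s) = n"
  by (simp_all add: spm_def)

lemma spm_index: "i < n \<Longrightarrow> j < n \<Longrightarrow> spm n \<sigma> s $$ (i,j) = (if i = \<sigma> j then s j else 0)"
  by (simp add: spm_def)

lemma spm_mult:
  assumes "\<tau> permutes {..<n}"
  shows "spm n \<sigma> s * spm n \<tau> t = spm n (\<sigma> \<circ> \<tau>) (\<lambda>j. s (\<tau> j) * t j)"
proof (rule eq_matI)
  fix i j assume i: "i < dim_row (spm n (\<sigma> \<circ> \<tau>) (\<lambda>j. s (\<tau> j) * t j))"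
    and j: "j < dim_col (spm n (\<sigma> \<circ> \<tau>) (\<lambda>j. s (\<tau> j) * t j))"
  have tj: "\<tau> j < n" using permutes_in_image[OF assms] j by simp
  have "(spm n \<sigma> s * spm n \<tau> t) $$ (i,j) = (\<Sum>k\<in>{0..<n}. spm n \<sigma> s $$ (i,k) * spm n \<tau> t $$ (k,j))"
    using i j by (simp add: scalar_prod_def)
  also have "\<dots> = (\<Sum>k\<in>{0..<n}. if k = \<tau> j then (if i = \<sigma> k then s k else 0) * t j else 0)"
    using i j by (intro sum.cong) (auto simp: spm_index)
  also have "\<dots> = (if i = \<sigma> (\<tau> j) then s (\<tau> j) * t j else 0)"
    using tj by (simp add: sum.delta)
  finally show "(spm n \<sigma> s * spm n \<tau> t) $$ (i,j) = spm n (\<sigma> \<circ> \<tau>) (\<lambda>j. s (\<tau> j) * t j) $$ (i,j)"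
    using i j by (simp add: spm_index)
qed auto

lemma spm_eq:
  assumes "\<And>j. j < n \<Longrightarrow> \<sigma> j = \<sigma>' j" "\<And>j. j < n \<Longrightarrow> s j = s' j"
  shows "spm n \<sigma> s = spm n \<sigma>' s'"
  using assms by (intro eq_matI) (auto simp: spm_index)

lemma spm_one:
  assumes "\<And>j. j < n \<Longrightarrow> \<sigma> j = j" "\<And>j. j < n \<Longrightarrow> s j = 1"
  shows "spm n \<sigma> s = 1\<^sub>m n"
  using assms by (intro eq_matI) (auto simp: spm_index)



abbreviation GL6 :: "real mat monoid" where "GL6 \<equiv> GL_mat 6"

definition W6 :: "real mat set" where
  "W6 = {spm 6 \<sigma> s | \<sigma> s. \<sigma> permutes {..<6} \<and> (\<forall>j<6. s j = 1 \<or> s j = -1) \<and> (\<Prod>j<6. s j) = 1}"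

lemma pm_sq: "(x::real) = 1 \<or> x = -1 \<Longrightarrow> x * x = 1" by auto

lemma spm_GL:
  assumes \<sigma>: "\<sigma> permutes {..<6}" and s: "\<forall>j<6. s j = 1 \<or> s j = (-1::real)"
  shows "spm 6 \<sigma> s \<in> carrier GL6"
proof -
  let ?B = "spm 6 (inv_into UNIV \<sigma>) (\<lambda>j. s (inv_into UNIV \<sigma> j))"
  have iv: "inv_into UNIV \<sigma> permutes {..<6}" using permutes_inv[OF \<sigma>] .
  have "spm 6 \<sigma> s * ?B = spm 6 (\<sigma> \<circ> inv_into UNIV \<sigma>) (\<lambda>j. s (inv_into UNIV \<sigma> j) * s (inv_into UNIV \<sigma> j))"
    by (rule spm_mult[OF iv])
  also have "\<dots> = 1\<^sub>m 6"
  proof (rule spm_one)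
    fix j :: nat assume j: "j < 6"
    show "(\<sigma> \<circ> inv_into UNIV \<sigma>) j = j" using permutes_inverses[OF \<sigma>] by simp
    have "inv_into UNIV \<sigma> j < 6" using permutes_in_image[OF iv] j by simp
    then show "s (inv_into UNIV \<sigma> j) * s (inv_into UNIV \<sigma> j) = 1" using s pm_sq by blast
  qed
  finally have 1: "spm 6 \<sigma> s * ?B = 1\<^sub>m 6" .
  have "?B * spm 6 \<sigma> s = spm 6 (inv_into UNIV \<sigma> \<circ> \<sigma>) (\<lambda>j. s (inv_into UNIV \<sigma> (\<sigma> j)) * s j)"
    by (rule spm_mult[OF \<sigma>])
  also have "\<dots> = 1\<^sub>m 6"
  proof (rule spm_one)
    fix j :: nat assume j: "j < 6"
    show "(inv_into UNIV \<sigma> \<circ> \<sigma>) j = j" using permutes_inverses[OF \<sigma>] by simp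
    show "s (inv_into UNIV \<sigma> (\<sigma> j)) * s j = 1" using permutes_inverses[OF \<sigma>] s pm_sq j by simp
  qed
  finally have 2: "?B * spm 6 \<sigma> s = 1\<^sub>m 6" .
  have "invertible_mat (spm 6 \<sigma> s)" unfolding inv_char[OF spm_carrier]
    using 1 2 spm_carrier by blast
  then show ?thesis by (simp add: GL_carrier)
qed

lemma W6_sub: "W6 \<subseteq> carrier GL6"
  unfolding W6_def using spm_GL by blast

lemma W6_mult:
  assumes "x \<in> W6" "y \<in> W6" shows "x * y \<in> W6"
proof -
  obtain \<sigma> s where x: "x = spm 6 \<sigma> s" and \<sigma>: "\<sigma> permutes {..<6}" and s: "\<forall>j<6. s j = 1 \<or> s j = -1"
    and ps: "(\<Prod>j<6. s j) = 1" using assms(1) unfolding W6_def by blast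
  obtain \<tau> t where y: "y = spm 6 \<tau> t" and \<tau>: "\<tau> permutes {..<6}" and t: "\<forall>j<6. t j = 1 \<or> t j = -1"
    and pt: "(\<Prod>j<6. t j) = 1" using assms(2) unfolding W6_def by blast
  have xy: "x * y = spm 6 (\<sigma> \<circ> \<tau>) (\<lambda>j. s (\<tau> j) * t j)" unfolding x y by (rule spm_mult[OF \<tau>])
  have 1: "\<sigma> \<circ> \<tau> permutes {..<6}" using permutes_compose[OF \<tau> \<sigma>] .
  have 2: "\<forall>j<6. s (\<tau> j) * t j = 1 \<or> s (\<tau> j) * t j = -1"
  proof (intro allI impI)
    fix j :: nat assume j: "j < 6"
    then have "\<tau> j < 6" using permutes_in_image[OF \<tau>] by simp
    then show "s (\<tau> j) * t j = 1 \<or> s (\<tau> j) * t j = -1" using s t j by force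
  qed
  have "(\<Prod>j<6. s (\<tau> j) * t j) = (\<Prod>j<6. s (\<tau> j)) * (\<Prod>j<6. t j)"
    by (rule prod.distrib)
  also have "(\<Prod>j<6. s (\<tau> j)) = (\<Prod>j<6. s j)"
    using prod.permute[OF \<tau>, of s] by (simp add: comp_def)
  finally have 3: "(\<Prod>j<6. s (\<tau> j) * t j) = 1" using ps pt by simp
  show ?thesis unfolding xy W6_def using 1 2 3 by blast
qed

lemma W6_inv:
  assumes "x \<in> W6" shows "inv\<^bsub>GL6\<^esub> x \<in> W6"
proof -
  interpret G: group GL6 by (rule GL_group)
  obtain \<sigma> s where x: "x = spm 6 \<sigma> s" and \<sigma>: "\<sigma> permutes {..<6}" and s: "\<forall>j<6. s j = 1 \<or> s j = -1"
    and ps: "(\<Prod>j<6. s j) = 1" using assms(1) unfolding W6_def by blast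
  let ?B = "spm 6 (inv_into UNIV \<sigma>) (\<lambda>j. s (inv_into UNIV \<sigma> j))"
  have iv: "inv_into UNIV \<sigma> permutes {..<6}" using permutes_inv[OF \<sigma>] .
  have s2: "\<forall>j<6. s (inv_into UNIV \<sigma> j) = 1 \<or> s (inv_into UNIV \<sigma> j) = -1"
    using s permutes_in_image[OF iv] by auto
  have p2: "(\<Prod>j<6. s (inv_into UNIV \<sigma> j)) = 1"
    using prod.permute[OF iv, of s] ps by (simp add: comp_def)
  have BW: "?B \<in> W6" unfolding W6_def using iv s2 p2 by blast
  have "?B * spm 6 \<sigma> s = spm 6 (inv_into UNIV \<sigma> \<circ> \<sigma>) (\<lambda>j. s (inv_into UNIV \<sigma> (\<sigma> j)) * s j)"
    by (rule spm_mult[OF \<sigma>])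
  also have "\<dots> = 1\<^sub>m 6"
  proof (rule spm_one)
    fix j :: nat assume j: "j < 6"
    show "(inv_into UNIV \<sigma> \<circ> \<sigma>) j = j" using permutes_inverses[OF \<sigma>] by simp
    show "s (inv_into UNIV \<sigma> (\<sigma> j)) * s j = 1" using permutes_inverses[OF \<sigma>] s pm_sq j by simp
  qed
  finally have "?B \<otimes>\<^bsub>GL6\<^esub> x = \<one>\<^bsub>GL6\<^esub>" by (simp add: x GL_mult GL_one)
  then have "inv\<^bsub>GL6\<^esub> x = ?B"
    using G.inv_equality assms W6_sub BW by blast
  then show ?thesis using BW by simp
qed

lemma W6_subgroup: "subgroup W6 GL6"
proof -
  interpret G: group GL6 by (rule GL_group)
  have "spm 6 id (\<lambda>_. 1) \<in> W6" unfolding W6_def by (auto intro!: exI permutes_id)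
  then show ?thesis
    using W6_sub W6_inv W6_mult by (intro G.subgroupI) (auto simp: GL_mult)
qed

lemma gen_sub_W6: "X \<subseteq> W6 \<Longrightarrow> generate GL6 X \<subseteq> W6"
  using group.generate_subgroup_incl[OF GL_group _ W6_subgroup] by blast



lemma prod6: "(\<Prod>j<(6::nat). f j) = f 0 * f 1 * f 2 * f 3 * f 4 * (f 5 :: 'a::comm_monoid_mult)"
  by (simp add: numeral_eq_Suc lessThan_Suc mult_ac)

abbreviation tr :: "nat \<Rightarrow> nat \<Rightarrow> real mat" where "tr a b \<equiv> spm 6 (transpose a b) (\<lambda>_. 1)"
definition Dsg :: "nat \<Rightarrow> real mat" where
  "Dsg a = spm 6 id (\<lambda>j. if j = a \<or> j = 5 then -1 else 1)"

lemma tp6: "(a::nat) < 6 \<Longrightarrow> (b::nat) < 6 \<Longrightarrow> transpose a b permutes {..<6}"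
  by (rule permutes_swap_id) auto

context
  fixes K assumes K: "subgroup K GL6"
begin

lemma Kmult: "x \<in> K \<Longrightarrow> y \<in> K \<Longrightarrow> x * y \<in> K"
  using subgroup.m_closed[OF K] by (simp add: GL_mult)

lemma Kone: "1\<^sub>m 6 \<in> K"
  using subgroup.one_closed[OF K] by (simp add: GL_one)

lemma trans_in:
  assumes adj: "\<And>i. i < 5 \<Longrightarrow> tr i (Suc i) \<in> K"
  shows "a + Suc d < 6 \<Longrightarrow> tr a (a + Suc d) \<in> K"
proof (induction d arbitrary: a)
  case 0 then show ?case using adj by simp
next
  case (Suc d)
  define b where "b = a + Suc d"
  have b: "Suc b < 6" "a < b" using Suc.prems by (auto simp: b_def)
  have IH: "tr a b \<in> K" using Suc.IH[of a] b by (simp add: b_def)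
  have "tr b (Suc b) * tr a b * tr b (Suc b) = tr a (Suc b)"
    using b
    apply (simp add: spm_mult tp6)
    apply (rule spm_eq)
     apply (auto simp: transpose_def)
    done
  moreover have "tr b (Suc b) * tr a b * tr b (Suc b) \<in> K"
    using adj b IH by (intro Kmult) auto
  ultimately show ?case by (simp add: b_def)
qed

lemma trans_in2:
  assumes adj: "\<And>i. i < 5 \<Longrightarrow> tr i (Suc i) \<in> K" and ab: "a < 6" "b < 6"
  shows "tr a b \<in> K"
proof -
  have lt: "a < b \<Longrightarrow> b < 6 \<Longrightarrow> tr a b \<in> K" for a b
    using trans_in[OF adj, of a "b - a - 1"] by simp
  consider "a < b" | "a = b" | "b < a" by arith
  then show ?thesis
  proof cases
    case 1 then show ?thesis using lt ab by simp
  next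
    case 2 then have "tr a b = 1\<^sub>m 6" by (intro spm_one) auto
    then show ?thesis using Kone by simp
  next
    case 3 then show ?thesis using lt[of b a] ab by (simp add: transpose_commute)
  qed
qed

lemma perm_in:
  assumes adj: "\<And>i. i < 5 \<Longrightarrow> tr i (Suc i) \<in> K" and p: "p permutes {..<6}"
  shows "spm 6 p (\<lambda>_. 1) \<in> K"
  using p finite_lessThan
proof (induction rule: permutes_induct)
  case id
  have "spm 6 id (\<lambda>_. 1::real) = 1\<^sub>m 6" by (intro spm_one) auto
  then show ?case using Kone by (simp only:)
next
  case (swap a b p)
  have pp: "p permutes {..<6}" using swap by auto
  have "tr a b * spm 6 p (\<lambda>_. 1) = spm 6 (transpose a b \<circ> p) (\<lambda>_. 1)"
    using spm_mult[OF pp, of "transpose a b" "\<lambda>_. 1" "\<lambda>_. 1"] by simp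
  moreover have "tr a b * spm 6 p (\<lambda>_. 1) \<in> K"
    using trans_in2[OF adj] swap by (intro Kmult) auto
  ultimately show ?case by (simp only:)
qed

lemma D_in:
  assumes adj: "\<And>i. i < 5 \<Longrightarrow> tr i (Suc i) \<in> K" and D4: "Dsg 4 \<in> K" and a: "a < 5"
  shows "Dsg a \<in> K"
proof (cases "a = 4")
  case True then show ?thesis using D4 by simp
next
  case False
  have "tr a 4 * Dsg 4 * tr a 4 = Dsg a"
    using a False
    apply (simp add: Dsg_def spm_mult tp6 permutes_id)
    apply (rule spm_eq)
     apply (auto simp: transpose_def)
    done
  moreover have "tr a 4 * Dsg 4 * tr a 4 \<in> K"
    using trans_in2[OF adj] a D4 by (intro Kmult) auto
  ultimately show ?thesis by simp
qed

lemma diag_in: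
  assumes adj: "\<And>i. i < 5 \<Longrightarrow> tr i (Suc i) \<in> K" and D4: "Dsg 4 \<in> K"
  shows "n \<le> 5 \<Longrightarrow> (\<forall>j<6. s j = 1 \<or> s j = -1) \<Longrightarrow> (\<forall>j. n \<le> j \<and> j < 5 \<longrightarrow> s j = 1)
     \<Longrightarrow> (\<Prod>j<6. s j) = 1 \<Longrightarrow> spm 6 id s \<in> K"
proof (induction n arbitrary: s)
  case 0
  then have "\<forall>j<5. s j = 1" by auto
  then have "s 5 = 1" using 0 by (simp add: prod6)
  have "\<forall>j<6. s j = 1"
  proof (intro allI impI)
    fix j :: nat assume "j < 6" then have "j < 5 \<or> j = 5" by arith
    then show "s j = 1" using \<open>s 5 = 1\<close> \<open>\<forall>j<5. s j = 1\<close> by auto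
  qed
  then have "spm 6 id s = 1\<^sub>m 6" by (intro spm_one) auto
  then show ?case using Kone by (simp only:)
next
  case (Suc n)
  show ?case
  proof (cases "s n = 1")
    case True
    then show ?thesis using Suc.IH[of s] Suc.prems by (metis Suc_leD le_antisym not_less_eq_eq)
  next
    case False
    moreover have "n < 6" using Suc.prems by simp
    ultimately have sn: "s n = -1" using Suc.prems(2) by blast
    define s' where "s' = s(n := 1, 5 := - s 5)"
    have n5: "n < 5" using Suc.prems by simp
    have "s 5 = 1 \<or> s 5 = -1" using Suc.prems(2)[rule_format, of 5] by simp
    then have "- s 5 = 1 \<or> - s 5 = -1" by auto
    then have s'1: "\<forall>j<6. s' j = 1 \<or> s' j = -1" using Suc.prems(2) unfolding s'_def by simp
    have s'2: "\<forall>j. n \<le> j \<and> j < 5 \<longrightarrow> s' j = 1" using Suc.prems(3) by (auto simp: s'_def)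
    have s'3: "(\<Prod>j<6. s' j) = 1"
    proof -
      have "n = 0 \<or> n = 1 \<or> n = 2 \<or> n = 3 \<or> n = 4" using n5 by auto
      then show ?thesis using Suc.prems(4) sn by (auto simp: prod6 s'_def)
    qed
    have K': "spm 6 id s' \<in> K" using Suc.IH[OF _ s'1 s'2 s'3] n5 by (simp add: id_def)
    have "Dsg n * spm 6 id s' = spm 6 id s"
      using n5 sn by (auto simp: Dsg_def spm_mult permutes_id s'_def intro!: spm_eq)
    moreover have "Dsg n * spm 6 id s' \<in> K" using D_in[OF adj D4 n5] K' by (rule Kmult)
    ultimately show ?thesis by (simp add: id_def)
  qed
qed

lemma W6_in:
  assumes adj: "\<And>i. i < 5 \<Longrightarrow> tr i (Suc i) \<in> K" and D4: "Dsg 4 \<in> K"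
  shows "W6 \<subseteq> K"
proof
  fix x assume "x \<in> W6"
  then obtain \<sigma> s where x: "x = spm 6 \<sigma> s" and \<sigma>: "\<sigma> permutes {..<6}" and s: "\<forall>j<6. s j = 1 \<or> s j = -1"
    and ps: "(\<Prod>j<6. s j) = 1" unfolding W6_def by blast
  have "spm 6 \<sigma> (\<lambda>_. 1) * spm 6 id s = x" using spm_mult[OF permutes_id, of 6 \<sigma> "\<lambda>_. 1" s] x by simp
  moreover have "spm 6 \<sigma> (\<lambda>_. 1) * spm 6 id s \<in> K"
    using perm_in[OF adj \<sigma>] diag_in[OF adj D4, of 5 s] s ps by (intro Kmult) auto
  ultimately show "x \<in> K" by simp
qed

end



lemma sum6: "(\<Sum>j<(6::nat). f j) = f 0 + f 1 + f 2 + f 3 + f 4 + (f 5 :: 'a::comm_monoid_add)"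
  by (simp add: numeral_eq_Suc lessThan_Suc add_ac)

definition neg45 :: "nat \<Rightarrow> real" where "neg45 = (\<lambda>j. if j = 4 \<or> j = 5 then -1 else 1)"
definition neg12 :: "nat \<Rightarrow> real" where "neg12 = (\<lambda>j. if j = 1 \<or> j = 2 then -1 else 1)"

lemma refl_adj:
  assumes i: "i < 5"
  shows "refl_mat 6 (\<lambda>k. e_vec i k - e_vec (Suc i) k) = tr i (Suc i)"
proof -
  have s: "(\<Sum>k<6. (e_vec i k - e_vec (Suc i) k)^2) = 2"
  proof -
    have "i = 0 \<or> i = 1 \<or> i = 2 \<or> i = 3 \<or> i = 4" using i by auto
    then show ?thesis by (auto simp: sum6 e_vec_def)
  qed
  show ?thesis
    unfolding refl_mat_def s by (rule eq_matI) (auto simp: spm_index e_vec_def transpose_def)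
qed

lemma refl_D: "refl_mat 6 (\<lambda>k. e_vec 4 k + e_vec 5 k) = spm 6 (transpose 4 5) neg45"
proof -
  have s: "(\<Sum>k<6. (e_vec 4 k + e_vec 5 k)^2) = 2"
    by (auto simp: sum6 e_vec_def)
  show ?thesis
    unfolding refl_mat_def s by (rule eq_matI) (auto simp: spm_index e_vec_def transpose_def neg45_def)
qed

definition S6 :: "real mat set" where
  "S6 = {tr i (Suc i) | i. i < 5} \<union> {spm 6 (transpose 4 5) neg45}"

lemma refl_img: "refl_mat 6 ` D6_simple_roots = S6"
proof
  show "refl_mat 6 ` D6_simple_roots \<subseteq> S6"
    unfolding D6_simple_roots_def S6_def using refl_adj refl_D by auto
  show "S6 \<subseteq> refl_mat 6 ` D6_simple_roots"
  proof
    fix x assume "x \<in> S6"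
    then consider i where "i < 5" "x = tr i (Suc i)" | "x = spm 6 (transpose 4 5) neg45"
      unfolding S6_def by blast
    then show "x \<in> refl_mat 6 ` D6_simple_roots"
    proof cases
      case 1
      then show ?thesis using refl_adj[of i]
        unfolding D6_simple_roots_def by (intro image_eqI[of _ _ "\<lambda>k. e_vec i k - e_vec (Suc i) k"]) auto
    next
      case 2
      then show ?thesis using refl_D
        unfolding D6_simple_roots_def by (intro image_eqI[of _ _ "\<lambda>k. e_vec 4 k + e_vec 5 k"]) auto
    qed
  qed
qed

definition H6 :: "real mat set" where
  "H6 = {spm 6 (transpose 1 2) neg12, tr 0 1, tr 1 2, tr 3 4, tr 4 5,
         spm 6 (transpose 0 5 \<circ> transpose 1 2) (\<lambda>_. 1)}"

lemma tr_W6: "a < 6 \<Longrightarrow> b < 6 \<Longrightarrow> tr a b \<in> W6"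
  unfolding W6_def using tp6 by fastforce

lemma S6_W6: "S6 \<subseteq> W6"
proof -
  have "spm 6 (transpose 4 5) neg45 \<in> W6"
    unfolding W6_def using tp6[of 4 5] by (auto simp: neg45_def prod6 intro!: exI)
  then show ?thesis unfolding S6_def using tr_W6 by auto
qed

lemma H6_W6: "H6 \<subseteq> W6"
proof -
  have "spm 6 (transpose 1 2) neg12 \<in> W6"
    unfolding W6_def using tp6[of 1 2] by (auto simp: neg12_def prod6 intro!: exI)
  moreover have "transpose 0 5 \<circ> transpose 1 2 permutes {..<6::nat}"
    by (intro permutes_compose tp6) auto
  then have "spm 6 (transpose 0 5 \<circ> transpose 1 2) (\<lambda>_. 1) \<in> W6"
    unfolding W6_def by (auto intro!: exI)
  ultimately show ?thesis unfolding H6_def using tr_W6 by auto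
qed

lemma gen_sub: "X \<subseteq> W6 \<Longrightarrow> subgroup (generate GL6 X) GL6"
  using group.generate_is_subgroup[OF GL_group] W6_sub by blast

lemma gen_S6: "generate GL6 S6 = W6"
proof
  show "generate GL6 S6 \<subseteq> W6" using gen_sub_W6[OF S6_W6] .
  let ?K = "generate GL6 S6"
  have K: "subgroup ?K GL6" using gen_sub[OF S6_W6] .
  have inc: "x \<in> S6 \<Longrightarrow> x \<in> ?K" for x by (rule generate.incl)
  have adj: "i < 5 \<Longrightarrow> tr i (Suc i) \<in> ?K" for i using inc unfolding S6_def by blast
  have "spm 6 (transpose 4 5) neg45 * tr 4 5 = Dsg 4"
    apply (simp add: spm_mult tp6 Dsg_def)
    apply (rule spm_eq)
     apply (auto simp: transpose_def neg45_def)
    done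
  moreover have "spm 6 (transpose 4 5) neg45 \<in> ?K" by (rule inc) (simp add: S6_def)
  then have "spm 6 (transpose 4 5) neg45 * tr 4 5 \<in> ?K"
    using adj[of 4] by (intro Kmult[OF K]) auto
  ultimately have "Dsg 4 \<in> ?K" by simp
  then show "W6 \<subseteq> ?K" using W6_in[OF K adj] by blast
qed

lemma gen_H6: "generate GL6 H6 = W6"
proof
  show "generate GL6 H6 \<subseteq> W6" using gen_sub_W6[OF H6_W6] .
  let ?K = "generate GL6 H6"
  have K: "subgroup ?K GL6" using gen_sub[OF H6_W6] .
  note M = Kmult[OF K]
  have inc: "x \<in> H6 \<Longrightarrow> x \<in> ?K" for x by (rule generate.incl)
  have t01: "tr 0 1 \<in> ?K" and t12: "tr 1 2 \<in> ?K" and t34: "tr 3 4 \<in> ?K" and t45: "tr 4 5 \<in> ?K"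
    and hA: "spm 6 (transpose 0 5 \<circ> transpose 1 2) (\<lambda>_. 1) \<in> ?K"
    and h0: "spm 6 (transpose 1 2) neg12 \<in> ?K"
    using inc unfolding H6_def by auto
  have "spm 6 (transpose 0 5 \<circ> transpose 1 2) (\<lambda>_. 1) * tr 1 2 = tr 0 5"
    by (simp add: spm_mult tp6, rule spm_eq) (auto simp: transpose_def)
  with M[OF hA t12] have t05: "tr 0 5 \<in> ?K" by simp
  have "tr 0 1 * tr 1 2 * tr 0 1 = tr 0 2"
    by (simp add: spm_mult tp6, rule spm_eq) (auto simp: transpose_def)
  with M[OF M[OF t01 t12] t01] have t02: "tr 0 2 \<in> ?K" by simp
  have "tr 0 2 * tr 0 5 * tr 0 2 = tr 2 5"
    by (simp add: spm_mult tp6, rule spm_eq) (auto simp: transpose_def)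
  with M[OF M[OF t02 t05] t02] have t25: "tr 2 5 \<in> ?K" by simp
  have "tr 4 5 * tr 3 4 * tr 4 5 = tr 3 5"
    by (simp add: spm_mult tp6, rule spm_eq) (auto simp: transpose_def)
  with M[OF M[OF t45 t34] t45] have t35: "tr 3 5 \<in> ?K" by simp
  have "tr 2 5 * tr 3 5 * tr 2 5 = tr 2 3"
    by (simp add: spm_mult tp6, rule spm_eq) (auto simp: transpose_def)
  with M[OF M[OF t25 t35] t25] have t23: "tr 2 3 \<in> ?K" by simp
  have adj: "i < 5 \<Longrightarrow> tr i (Suc i) \<in> ?K" for i
  proof -
    assume "i < 5"
    then have "i = 0 \<or> i = 1 \<or> i = 2 \<or> i = 3 \<or> i = 4" by auto
    then show ?thesis using t01 t12 t23 t34 t45 by (auto simp: numeral_eq_Suc)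
  qed
  have t14: "tr 1 4 \<in> ?K" using trans_in2[OF K adj] by simp
  have "spm 6 (transpose 1 2) neg12 * tr 1 2 = spm 6 id neg12"
    by (simp add: spm_mult tp6, rule spm_eq) (auto simp: transpose_def neg12_def)
  with M[OF h0 t12] have d12: "spm 6 id neg12 \<in> ?K" by simp
  have "tr 1 4 * tr 2 5 * spm 6 id neg12 * tr 2 5 * tr 1 4 = Dsg 4"
    by (simp add: spm_mult tp6 permutes_id Dsg_def, rule spm_eq) (auto simp: transpose_def neg12_def)
  with M[OF M[OF M[OF M[OF t14 t25] d12] t25] t14] have "Dsg 4 \<in> ?K" by simp
  then show "W6 \<subseteq> ?K" using W6_in[OF K adj] by blast
qed



lemma pm_prod: "finite A \<Longrightarrow> \<forall>x\<in>A. f x = 1 \<or> f x = -1 \<Longrightarrow> prod f A = 1 \<or> prod f A = (-1::real)"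
  by (induction A rule: finite_induct) auto

definition ext :: "(nat \<Rightarrow> real) \<Rightarrow> nat \<Rightarrow> real" where
  "ext u j = (if j < 5 then u j else (\<Prod>k<5. u k))"

lemma six_insert: "{..<6::nat} = insert 5 {..<5}" by auto

lemma card_W6: "card W6 = 23040"
proof -
  define Dom where "Dom = {\<sigma>. \<sigma> permutes {..<6::nat}} \<times> ({..<5::nat} \<rightarrow>\<^sub>E {1,-1::real})"
  define F where "F = (\<lambda>(\<sigma>,u). spm 6 \<sigma> (ext u))"
  have extpm: "\<forall>j<6. ext u j = 1 \<or> ext u j = -1" if u: "u \<in> {..<5} \<rightarrow>\<^sub>E {1,-1::real}" for u
  proof (intro allI impI)
    fix j :: nat assume j: "j < 6"
    have "prod u {..<5} = 1 \<or> prod u {..<5} = -1" using u by (intro pm_prod) auto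
    then show "ext u j = 1 \<or> ext u j = -1" using u by (auto simp: ext_def)
  qed
  have "W6 = F ` Dom"
  proof
    show "F ` Dom \<subseteq> W6"
    proof
      fix x assume "x \<in> F ` Dom"
      then obtain \<sigma> u where x: "x = spm 6 \<sigma> (ext u)" and \<sigma>: "\<sigma> permutes {..<6}"
        and u: "u \<in> {..<5} \<rightarrow>\<^sub>E {1,-1::real}" unfolding Dom_def F_def by auto
      have P: "prod u {..<5} = 1 \<or> prod u {..<5} = -1" using u by (intro pm_prod) auto
      have "(\<Prod>j<6. ext u j) = ext u 5 * (\<Prod>j<5. ext u j)" by (simp add: six_insert)
      also have "(\<Prod>j<5. ext u j) = prod u {..<5}" by (intro prod.cong) (auto simp: ext_def)
      finally have "(\<Prod>j<6. ext u j) = 1" using P by (auto simp: ext_def)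
      then show "x \<in> W6" unfolding W6_def x using \<sigma> extpm[OF u] by blast
    qed
    show "W6 \<subseteq> F ` Dom"
    proof
      fix x assume "x \<in> W6"
      then obtain \<sigma> s where x: "x = spm 6 \<sigma> s" and \<sigma>: "\<sigma> permutes {..<6}" and s: "\<forall>j<6. s j = 1 \<or> s j = -1"
        and ps: "(\<Prod>j<6. s j) = 1" unfolding W6_def by blast
      define u where "u = restrict s {..<5}"
      have u: "u \<in> {..<5} \<rightarrow>\<^sub>E {1,-1::real}" using s by (auto simp: u_def)
      have "s 5 * prod s {..<5} = 1" using ps by (simp add: six_insert)
      moreover have "s 5 = 1 \<or> s 5 = -1" using s by simp
      ultimately have s5: "s 5 = prod s {..<5}" by auto
      have "x = spm 6 \<sigma> (ext u)"
        unfolding x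
      proof (rule spm_eq)
        fix j :: nat assume "j < 6"
        then have "j < 5 \<or> j = 5" by arith
        moreover have "prod u {..<5} = prod s {..<5}" by (intro prod.cong) (auto simp: u_def)
        ultimately show "s j = ext u j" using s5 by (auto simp: ext_def u_def)
      qed simp
      then show "x \<in> F ` Dom" unfolding F_def Dom_def using \<sigma> u by force
    qed
  qed
  moreover have "inj_on F Dom"
  proof (rule inj_onI)
    fix p q assume p: "p \<in> Dom" and q: "q \<in> Dom" and eq: "F p = F q"
    obtain \<sigma> u where pp: "p = (\<sigma>, u)" by (cases p)
    obtain \<tau> v where qq: "q = (\<tau>, v)" by (cases q)
    have \<sigma>: "\<sigma> permutes {..<6}" and u: "u \<in> {..<5} \<rightarrow>\<^sub>E {1,-1::real}"
      and \<tau>: "\<tau> permutes {..<6}" and v: "v \<in> {..<5} \<rightarrow>\<^sub>E {1,-1::real}"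
      using p q pp qq by (auto simp: Dom_def)
    have E: "spm 6 \<sigma> (ext u) = spm 6 \<tau> (ext v)" using eq pp qq by (simp add: F_def)
    have both: "\<sigma> j = \<tau> j \<and> ext u j = ext v j" if j: "j < 6" for j
    proof -
      have sj: "\<sigma> j < 6" using permutes_in_image[OF \<sigma>] j by simp
      have "spm 6 \<sigma> (ext u) $$ (\<sigma> j, j) = spm 6 \<tau> (ext v) $$ (\<sigma> j, j)" using E by simp
      then have "ext u j = (if \<sigma> j = \<tau> j then ext v j else 0)" using sj j by (simp add: spm_index)
      moreover have "ext u j \<noteq> 0" using extpm[OF u] j by force
      ultimately show ?thesis by (auto split: if_splits)
    qed
    have "\<sigma> = \<tau>"
    proof
      fix x show "\<sigma> x = \<tau> x"
      proof (cases "x < 6")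
        case True then show ?thesis using both by blast
      next
        case False
        then show ?thesis using permutes_not_in[OF \<sigma>, of x] permutes_not_in[OF \<tau>, of x] by simp
      qed
    qed
    moreover have "u = v"
    proof (rule PiE_ext[OF u v])
      fix i :: nat assume "i \<in> {..<5}"
      then show "u i = v i" using both[of i] by (simp add: ext_def)
    qed
    ultimately show "p = q" using pp qq by simp
  qed
  ultimately have "card W6 = card Dom" using card_image by metis
  also have "\<dots> = fact 6 * 2 ^ 5"
    unfolding Dom_def card_cartesian_product
    by (subst card_permutations[of _ 6]) (auto simp: card_PiE numeral_2_eq_2[symmetric])
  also have "\<dots> = 23040" by (simp add: fact_numeral)
  finally show ?thesis .
qed



definition Qm :: "complex mat" where
 "Qm = mat 7 7 (\<lambda>(i,j). 
   [[1,1,1,1,1,1,1],[1,-1,-1,1,1,1,1],[-1,1,-1,1,1,1,1],[-1,-1,1,1,1,1,1],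
    [0,0,0,0,2,2,2],[0,0,0,2,0,2,2],[0,0,0,2,2,0,2]] ! i ! j)"
definition Qi :: "complex mat" where
 "Qi = mat 7 7 (\<lambda>(i,j). 
   [[1/4,1/4,-1/4,-1/4,0,0,0],[1/4,-1/4,1/4,-1/4,0,0,0],[1/4,-1/4,-1/4,1/4,0,0,0],
    [1/4,1/4,1/4,1/4,-1/2,0,0],[1/4,1/4,1/4,1/4,0,-1/2,0],[1/4,1/4,1/4,1/4,0,0,-1/2],
    [-1/2,-1/2,-1/2,-1/2,1/2,1/2,1/2]] ! i ! j)"

lemma less7: "(i::nat) < 7 \<longleftrightarrow> i = 0 \<or> i = 1 \<or> i = 2 \<or> i = 3 \<or> i = 4 \<or> i = 5 \<or> i = 6" by auto

lemma Qm_carrier[simp]: "Qm \<in> carrier_mat 7 7" by (simp add: Qm_def)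
lemma Qi_carrier[simp]: "Qi \<in> carrier_mat 7 7" by (simp add: Qi_def)

lemma sum7: "(\<Sum>i = 0..<(7::nat). f i) = f 0 + f 1 + f 2 + f 3 + f 4 + f 5 + (f 6 :: 'a::comm_monoid_add)"
  by (simp add: numeral_eq_Suc atLeast0LessThan lessThan_Suc add_ac)

lemma QQi: "Qm * Qi = 1\<^sub>m 7"
  by (rule eq_matI) (auto simp: Qm_def Qi_def scalar_prod_def sum7 less7)
lemma QiQ: "Qi * Qm = 1\<^sub>m 7"
  by (rule eq_matI) (auto simp: Qm_def Qi_def scalar_prod_def sum7 less7)

definition Bm :: "real mat \<Rightarrow> complex mat" where
  "Bm X = four_block_mat (map_mat complex_of_real X) (0\<^sub>m 6 1) (0\<^sub>m 1 6) (1\<^sub>m 1)"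

lemma Bm_carrier[simp]: "X \<in> carrier_mat 6 6 \<Longrightarrow> Bm X \<in> carrier_mat 7 7"
  unfolding Bm_def by (rule four_block_carrier_mat[of _ 6 6 _ 1 1, simplified]) auto
lemma Bm_dims[simp]: "X \<in> carrier_mat 6 6 \<Longrightarrow> dim_row (Bm X) = 7 \<and> dim_col (Bm X) = 7"
  by (simp add: Bm_def)

lemma Bm_index: "X \<in> carrier_mat 6 6 \<Longrightarrow> i < 7 \<Longrightarrow> j < 7 \<Longrightarrow> Bm X $$ (i,j) =
   (if i < 6 \<and> j < 6 then complex_of_real (X $$ (i,j)) else if i = j then 1 else 0)"
  by (auto simp: Bm_def)

lemma A_alt: "A_mat = mat 7 7 (\<lambda>(i,j).
    [[1,0,0,0,0,0,0],
     [0,1,0,0,0,0,0],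
     [0,0,-1,0,0,0,1],
     [0,0,0,-1,0,0,1],
     [0,0,-1,-1,1,0,1],
     [0,0,-1,-1,0,1,1],
     [0,0,0,0,0,0,1]] ! i ! j)"
  unfolding A_mat_def mat_of_rows_list_def by (simp add: numeral_eq_Suc)

lemma perm_left:
  assumes ab: "a < n" "b < n" and M: "M \<in> carrier_mat n n"
  shows "perm_mat n (transpose a b) * M = mat n n (\<lambda>(i,j). M $$ (transpose a b i, j))"
proof (rule eq_matI)
  fix i j assume i: "i < dim_row (mat n n (\<lambda>(i,j). M $$ (transpose a b i, j)))"
    and j: "j < dim_col (mat n n (\<lambda>(i,j). M $$ (transpose a b i, j)))"
  have ti: "transpose a b i < n" using i ab by (auto simp: transpose_def)
  have "(perm_mat n (transpose a b) * M) $$ (i,j) =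
     (\<Sum>k\<in>{0..<n}. (if i = transpose a b k then 1 else 0) * M $$ (k,j))"
    using i j M by (simp add: perm_mat_def scalar_prod_def)
  also have "\<dots> = (\<Sum>k\<in>{0..<n}. if k = transpose a b i then M $$ (k,j) else 0)"
    by (intro sum.cong) (auto simp: transpose_def)
  also have "\<dots> = M $$ (transpose a b i, j)" using ti by (simp add: sum.delta)
  finally show "(perm_mat n (transpose a b) * M) $$ (i,j) = mat n n (\<lambda>(i,j). M $$ (transpose a b i, j)) $$ (i,j)"
    using i j by simp
qed (use M in \<open>auto simp: perm_mat_def\<close>)

lemma bm_right:
  assumes M: "M \<in> carrier_mat 7 7" and \<sigma>: "\<sigma> permutes {..<6}"
  shows "M * Bm (spm 6 \<sigma> s) = mat 7 7 (\<lambda>(i,j). if j < 6 then M $$ (i, \<sigma> j) * complex_of_real (s j) else M $$ (i,j))"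
proof (rule eq_matI)
  fix i j assume i: "i < dim_row (mat 7 7 (\<lambda>(i,j). if j < 6 then M $$ (i, \<sigma> j) * complex_of_real (s j) else M $$ (i,j)))"
    and j: "j < dim_col (mat 7 7 (\<lambda>(i,j). if j < 6 then M $$ (i, \<sigma> j) * complex_of_real (s j) else M $$ (i,j)))"
  have "(M * Bm (spm 6 \<sigma> s)) $$ (i,j) = (\<Sum>k\<in>{0..<7}. M $$ (i,k) * Bm (spm 6 \<sigma> s) $$ (k,j))"
    using i j M by (simp add: scalar_prod_def)
  also have "\<dots> = (if j < 6 then M $$ (i, \<sigma> j) * complex_of_real (s j) else M $$ (i,j))"
  proof (cases "j < 6")
    case True
    have sj: "\<sigma> j < 6" using permutes_in_image[OF \<sigma>] True by simp
    have "(\<Sum>k\<in>{0..<7}. M $$ (i,k) * Bm (spm 6 \<sigma> s) $$ (k,j)) =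
          (\<Sum>k\<in>{0..<7}. if k = \<sigma> j then M $$ (i,k) * complex_of_real (s j) else 0)"
      using True sj j by (intro sum.cong) (auto simp: Bm_index spm_index)
    also have "\<dots> = M $$ (i, \<sigma> j) * complex_of_real (s j)" using sj by (simp add: sum.delta)
    finally show ?thesis using True by simp
  next
    case False
    then have j6: "j = 6" using j by simp
    have "(\<Sum>k\<in>{0..<7}. M $$ (i,k) * Bm (spm 6 \<sigma> s) $$ (k,j)) =
          (\<Sum>k\<in>{0..<7}. if k = 6 then M $$ (i,k) else 0)"
      using j6 by (intro sum.cong) (auto simp: Bm_index)
    also have "\<dots> = M $$ (i, j)" using j6 by (simp add: sum.delta)
    finally show ?thesis using False by simp
  qed
  finally show "(M * Bm (spm 6 \<sigma> s)) $$ (i,j) = mat 7 7 (\<lambda>(i,j). if j < 6 then M $$ (i, \<sigma> j) * complex_of_real (s j) else M $$ (i,j)) $$ (i,j)"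
    using i j by simp
qed (use M in auto)

lemma c1: "perm_mat 7 (transpose 0 1) * Qm = Qm * Bm (spm 6 (transpose 1 2) neg12)"
  apply (simp add: perm_left bm_right tp6)
  by (rule eq_matI) (auto simp: Qm_def less7 neg12_def transpose_def)
lemma c2: "perm_mat 7 (transpose 1 2) * Qm = Qm * Bm (tr 0 1)"
  apply (simp add: perm_left bm_right tp6)
  by (rule eq_matI) (auto simp: Qm_def less7 transpose_def)
lemma c3: "perm_mat 7 (transpose 2 3) * Qm = Qm * Bm (tr 1 2)"
  apply (simp add: perm_left bm_right tp6)
  by (rule eq_matI) (auto simp: Qm_def less7 transpose_def)
lemma c4: "perm_mat 7 (transpose 4 5) * Qm = Qm * Bm (tr 3 4)"
  apply (simp add: perm_left bm_right tp6)
  by (rule eq_matI) (auto simp: Qm_def less7 transpose_def)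
lemma c5: "perm_mat 7 (transpose 5 6) * Qm = Qm * Bm (tr 4 5)"
  apply (simp add: perm_left bm_right tp6)
  by (rule eq_matI) (auto simp: Qm_def less7 transpose_def)
lemma c6: "A_mat * Qm = Qm * Bm (spm 6 (transpose 0 5 \<circ> transpose 1 2) (\<lambda>_. 1))"
proof -
  have p: "transpose 0 5 \<circ> transpose 1 2 permutes {..<6::nat}" by (intro permutes_compose tp6) auto
  show ?thesis unfolding bm_right[OF Qm_carrier p]
    by (rule eq_matI) (auto simp: A_alt Qm_def scalar_prod_def sum7 less7 transpose_def)
qed



definition psi :: "real mat \<Rightarrow> complex mat" where "psi X = Qm * Bm X * Qi"

lemma as7: "A \<in> carrier_mat 7 7 \<Longrightarrow> B \<in> carrier_mat 7 7 \<Longrightarrow> C \<in> carrier_mat 7 7 \<Longrightarrow> A*B*C = A*(B*C)"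
  by (rule assoc_mult_mat)

lemma m77[simp]: "A \<in> carrier_mat 7 7 \<Longrightarrow> B \<in> carrier_mat 7 7 \<Longrightarrow> A * B \<in> carrier_mat 7 7"
  by (rule mult_carrier_mat)

lemma QiQm': "Z \<in> carrier_mat 7 7 \<Longrightarrow> Qi * (Qm * Z) = Z"
  using as7[of Qi Qm Z] QiQ by simp

lemma Bm_mult:
  assumes X: "X \<in> carrier_mat 6 6" and Y: "Y \<in> carrier_mat 6 6"
  shows "Bm (X*Y) = Bm X * Bm Y"
proof -
  have mX: "map_mat complex_of_real X \<in> carrier_mat 6 6" using X by simp
  have mY: "map_mat complex_of_real Y \<in> carrier_mat 6 6" using Y by simp
  have "Bm X * Bm Y = four_block_mat
     (map_mat complex_of_real X * map_mat complex_of_real Y + 0\<^sub>m 6 1 * 0\<^sub>m 1 6)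
     (map_mat complex_of_real X * 0\<^sub>m 6 1 + 0\<^sub>m 6 1 * 1\<^sub>m 1)
     (0\<^sub>m 1 6 * map_mat complex_of_real Y + 1\<^sub>m 1 * 0\<^sub>m 1 6)
     (0\<^sub>m 1 6 * 0\<^sub>m 6 1 + 1\<^sub>m 1 * 1\<^sub>m 1)"
    unfolding Bm_def by (rule mult_four_block_mat) (use mX mY in auto)
  also have "\<dots> = Bm (X*Y)"
    unfolding Bm_def using mX mY X Y
    by (simp add: of_real_hom.mat_hom_mult[OF X Y])
  finally show ?thesis by simp
qed

lemma Bm_one: "Bm (1\<^sub>m 6) = 1\<^sub>m 7"
proof -
  have "Bm (1\<^sub>m 6) = 1\<^sub>m (6+1)" unfolding Bm_def of_real_hom.mat_hom_one by (rule four_block_one_mat)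
  then show ?thesis by simp
qed

lemma psi_carrier: "X \<in> carrier_mat 6 6 \<Longrightarrow> psi X \<in> carrier_mat 7 7"
  by (simp add: psi_def)

lemma psi_mult:
  assumes X: "X \<in> carrier_mat 6 6" and Y: "Y \<in> carrier_mat 6 6"
  shows "psi (X*Y) = psi X * psi Y"
  using X Y by (simp add: psi_def as7 QiQm' Bm_mult)

lemma psi_one: "psi (1\<^sub>m 6) = 1\<^sub>m 7"
  by (simp add: psi_def Bm_one QQi right_mult_one_mat[OF Qm_carrier])

lemma psi_GL: "X \<in> carrier GL6 \<Longrightarrow> psi X \<in> carrier (GL_mat 7)"
proof -
  assume "X \<in> carrier GL6"
  then obtain B where X: "X \<in> carrier_mat 6 6" and B: "B \<in> carrier_mat 6 6" "X*B = 1\<^sub>m 6" "B*X = 1\<^sub>m 6"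
    by (auto simp: GL_carrier inv_char)
  have "psi X * psi B = 1\<^sub>m 7" using psi_mult[OF X B(1)] B psi_one by simp
  moreover have "psi B * psi X = 1\<^sub>m 7" using psi_mult[OF B(1) X] B psi_one by simp
  ultimately have "invertible_mat (psi X)"
    unfolding inv_char[OF psi_carrier[OF X]] using psi_carrier[OF B(1)] by blast
  then show ?thesis using psi_carrier[OF X] by (simp add: GL_carrier)
qed

lemma psi_hom: "psi \<in> hom GL6 (GL_mat 7)"
  unfolding hom_def using psi_GL psi_mult by (auto simp: GL_carrier GL_mult)

lemma psi_group_hom: "group_hom GL6 (GL_mat 7) psi"
  unfolding group_hom_def group_hom_axioms_def using GL_group[of 6, where 'a=real] GL_group[of 7, where 'a=complex] psi_hom by blast

lemma psi_back: "X \<in> carrier_mat 6 6 \<Longrightarrow> Qi * psi X * Qm = Bm X"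
  by (simp add: psi_def as7 QiQm' QiQ)

lemma psi_inj: "inj_on psi (carrier_mat 6 6)"
proof (rule inj_onI)
  fix X Y assume X: "X \<in> carrier_mat 6 6" and Y: "Y \<in> carrier_mat 6 6" and e: "psi X = psi Y"
  have B: "Bm X = Bm Y" using psi_back[OF X] psi_back[OF Y] e by simp
  show "X = Y"
  proof (rule eq_matI)
    fix i j assume i: "i < dim_row Y" and j: "j < dim_col Y"
    have "Bm X $$ (i,j) = Bm Y $$ (i,j)" using B by simp
    then show "X $$ (i,j) = Y $$ (i,j)" using i j X Y by (simp add: Bm_index)
  qed (use X Y in auto)
qed

lemma psi_gen:
  assumes "g \<in> carrier_mat 7 7" "h \<in> carrier_mat 6 6" "g * Qm = Qm * Bm h"
  shows "psi h = g"
proof -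
  have "psi h = (g * Qm) * Qi" unfolding psi_def assms(3) by (rule refl)
  also have "\<dots> = g * (Qm * Qi)" by (rule as7) (use assms in auto)
  also have "\<dots> = g" using QQi right_mult_one_mat[OF assms(1)] by simp
  finally show ?thesis .
qed

lemma G7_img:
  "{perm_mat 7 (transpose 0 1), perm_mat 7 (transpose 1 2), perm_mat 7 (transpose 2 3),
      perm_mat 7 (transpose 4 5), perm_mat 7 (transpose 5 6), A_mat} = psi ` H6"
proof -
  have pc: "perm_mat 7 \<sigma> \<in> carrier_mat 7 7" for \<sigma> by (simp add: perm_mat_def)
  have ac: "A_mat \<in> carrier_mat 7 7" by (simp add: A_alt)
  show ?thesis unfolding H6_def
    using psi_gen[OF pc _ c1] psi_gen[OF pc _ c2] psi_gen[OF pc _ c3] psi_gen[OF pc _ c4]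
      psi_gen[OF pc _ c5] psi_gen[OF ac _ c6] by simp
qed

theorem theorem6p1:
  shows "M_L \<cong> W_D6 \<and> card (carrier W_D6) = 23040"
proof -
  have WD: "W_D6 = GL6\<lparr>carrier := W6\<rparr>"
    by (simp add: W_D6_def gen_subgroup_def refl_img gen_S6)
  have W6c: "W6 \<subseteq> carrier_mat 6 6" using W6_sub by (auto simp: GL_carrier)
  have MLc: "carrier M_L = psi ` W6"
  proof -
    have "carrier M_L = generate (GL_mat 7) (psi ` H6)"
      unfolding M_L_def gen_subgroup_def G7_img by simp
    also have "\<dots> = psi ` generate GL6 H6"
      using group_hom.generate_img[OF psi_group_hom] H6_W6 W6_sub by blast
    finally show ?thesis by (simp add: gen_H6)
  qed
  have MLm: "mult M_L = (*)" by (simp add: M_L_def gen_subgroup_def GL_mult)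
  have "psi \<in> iso W_D6 M_L"
    unfolding iso_def hom_def bij_betw_def
    using MLc MLm W6c psi_mult inj_on_subset[OF psi_inj W6c]
    by (auto simp: GL_mult WD intro!: psi_mult)
  then have i1: "W_D6 \<cong> M_L" by (rule is_isoI)
  have "group W_D6" unfolding WD by (rule group.subgroup_imp_group[OF GL_group W6_subgroup])
  then have "M_L \<cong> W_D6" using group.iso_sym i1 by blast
  moreover have "card (carrier W_D6) = 23040" unfolding WD using card_W6 by simp
  ultimately show ?thesis by simp
qed

end
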